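(* Let $T,T'$ be System $\mathsf{F_\wedge}$ types over a well-formed context $\Theta, X <: \top$ with $\Theta, X <: \top \vdash T <: T'$, and let $S_-,S_+$ be any types well-formed over a well-formed context $\Theta,\Theta'$. Then $\Theta,\Theta' \vdash T[(S_-,S_+)/X] <: T'[(S_-,S_+)/X]$.
   Context: System $\mathsf{F_\wedge}$: raw types $T ::= \top \mid X \mid T \to T \mid \forall X.T \mid T \wedge T$, identified up to $\alpha$-conversion. Contexts are finite sequences of assumptions $X<:T$ or $x:T$ with distinct variables, each type well-formed over the preceding part. Subtyping $\Theta \vdash S <: T$ is generated by: (Var) $\Theta, X<:T,\Theta' \vdash X <: T$; (Top) $T <: \top$; (Refl); (Trans); ($\to$) from $S'<:S$ and $T<:T'$ infer $S\to T <: S' \to T'$; ($\forall$) from $\Theta, X<:\top \vdash S <: T$ infer $\Theta \vdash \forall X.S <: \forall X.T$; (meet) $S\wedge S' <: S$, $S \wedge S' <: S'$, and from $T<:S$, $T<:S'$ infer $T <: S\wedge S'$. Mixed substitution $T[(S_-,S_+)/X]$ (assuming by $\alpha$-conversion that neither $X$ nor free variables of $S_-,S_+$ are bound in $T$): $X[(S_-,S_+)/X] = S_+$; $Y[(S_-,S_+)/X] = Y$ for $Y \not\equiv X$; $\top[(S_-,S_+)/X]=\top$; $(T\to T')[(S_-,S_+)/X] = T[(S_+,S_-)/X] \to T'[(S_-,S_+)/X]$; $(\forall Y.T)[(S_-,S_+)/X] = \forall Y.T[(S_-,S_+)/X]$; $(T\wedge T')[(S_-,S_+)/X] = T[(S_-,S_+)/X]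 \wedge T'[(S_-,S_+)/X]$. *)

theory Defs
  imports Main
begin

(* Type variables are de Bruijn indices into the whole context (which also
   contains term-variable bindings), as in the POPLmark de Bruijn encoding.
   Contexts are lists with the MOST RECENT binding first. *)

datatype type =
    Top
  | TVar nat
  | Arrow type type
  | All type           (* forall X <: Top. T ; body under one binder *)
  | Meet type type

datatype binding = VarB type | TVarB type

type_synonym env = "binding list"

fun lift :: "nat \<Rightarrow> nat \<Rightarrow> type \<Rightarrow> type" where
  "lift n k Top = Top"
| "lift n k (TVar i) = (if i < k then TVar i else TVar (i + n))"
| "lift n k (Arrow S T) = Arrow (lift n k S) (lift n k T)"
| "lift n k (All T) = All (lift n (Suc k) T)"
| "lift n k (Meet S T) = Meet (lift n k S) (lift n k T)"

inductive wf_type :: "env \<Rightarrow> type \<Rightarrow> bool" where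
  wf_Top: "wf_type \<Gamma> Top"
| wf_TVar: "i < length \<Gamma> \<Longrightarrow> \<Gamma> ! i = TVarB U \<Longrightarrow> wf_type \<Gamma> (TVar i)"
| wf_Arrow: "wf_type \<Gamma> S \<Longrightarrow> wf_type \<Gamma> T \<Longrightarrow> wf_type \<Gamma> (Arrow S T)"
| wf_All: "wf_type (TVarB Top # \<Gamma>) T \<Longrightarrow> wf_type \<Gamma> (All T)"
| wf_Meet: "wf_type \<Gamma> S \<Longrightarrow> wf_type \<Gamma> T \<Longrightarrow> wf_type \<Gamma> (Meet S T)"

inductive wf_env :: "env \<Rightarrow> bool" where
  wf_Nil: "wf_env []"
| wf_TVarB: "wf_env \<Gamma> \<Longrightarrow> wf_type \<Gamma> T \<Longrightarrow> wf_env (TVarB T # \<Gamma>)"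
| wf_VarB: "wf_env \<Gamma> \<Longrightarrow> wf_type \<Gamma> T \<Longrightarrow> wf_env (VarB T # \<Gamma>)"

(* subtyping; the bound U stored at position i is relative to the tail of the
   context, so it is lifted by Suc i when read off *)
inductive sub :: "env \<Rightarrow> type \<Rightarrow> type \<Rightarrow> bool" where
  SA_Var: "wf_env \<Gamma> \<Longrightarrow> i < length \<Gamma> \<Longrightarrow> \<Gamma> ! i = TVarB U \<Longrightarrow>
             sub \<Gamma> (TVar i) (lift (Suc i) 0 U)"
| SA_Top: "wf_env \<Gamma> \<Longrightarrow> wf_type \<Gamma> T \<Longrightarrow> sub \<Gamma> T Top"
| SA_Refl: "wf_env \<Gamma> \<Longrightarrow> wf_type \<Gamma> T \<Longrightarrow> sub \<Gamma> T T"
| SA_Trans: "sub \<Gamma> S T \<Longrightarrow> sub \<Gamma> T U \<Longrightarrow> sub \<Gamma> S U"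
| SA_Arrow: "sub \<Gamma> S' S \<Longrightarrow> sub \<Gamma> T T' \<Longrightarrow> sub \<Gamma> (Arrow S T) (Arrow S' T')"
| SA_All: "sub (TVarB Top # \<Gamma>) S T \<Longrightarrow> sub \<Gamma> (All S) (All T)"
| SA_MeetL: "wf_env \<Gamma> \<Longrightarrow> wf_type \<Gamma> S \<Longrightarrow> wf_type \<Gamma> S' \<Longrightarrow> sub \<Gamma> (Meet S S') S"
| SA_MeetR: "wf_env \<Gamma> \<Longrightarrow> wf_type \<Gamma> S \<Longrightarrow> wf_type \<Gamma> S' \<Longrightarrow> sub \<Gamma> (Meet S S') S'"
| SA_Meet: "sub \<Gamma> T S \<Longrightarrow> sub \<Gamma> T S' \<Longrightarrow> sub \<Gamma> T (Meet S S')"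

(* Mixed substitution T[(Sm,Sp)/X] where T lives over (TVarB Top # Theta) with X = index 0,
   and the result lives over (Delta @ Theta) with n = length Delta.
   d = number of forall binders passed; Sm, Sp live over Delta @ Theta. *)
fun msubst :: "nat \<Rightarrow> nat \<Rightarrow> type \<Rightarrow> type \<Rightarrow> type \<Rightarrow> type" where
  "msubst d n Sm Sp Top = Top"
| "msubst d n Sm Sp (TVar i) =
     (if i < d then TVar i
      else if i = d then lift d 0 Sp
      else TVar (i - 1 + n))"
| "msubst d n Sm Sp (Arrow T T') = Arrow (msubst d n Sp Sm T) (msubst d n Sm Sp T')"
| "msubst d n Sm Sp (All T) = All (msubst (Suc d) n Sm Sp T)"
| "msubst d n Sm Sp (Meet T T') = Meet (msubst d n Sm Sp T) (msubst d n Sm Sp T')"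

end

theory Submission
  imports Defs
begin

inductive_cases wfE_TVar: "wf_type G (TVar i)"
inductive_cases wfE_Arrow: "wf_type G (Arrow S T)"
inductive_cases wfE_All: "wf_type G (All T)"
inductive_cases wfE_Meet: "wf_type G (Meet S T)"

lemma wf_weaken:
  "wf_type (G1 @ G2) S \<Longrightarrow> wf_type (G1 @ E @ G2) (lift (length E) (length G1) S)"
proof (induction S arbitrary: G1)
  case (TVar i)
  then obtain U where U: "i < length (G1 @ G2)" "(G1 @ G2) ! i = TVarB U"
    by (auto elim!: wfE_TVar wfE_All)
  show ?case
  proof (cases "i < length G1")
    case True
    then show ?thesis using U by (auto intro!: wf_TVar simp: nth_append)
  next
    case False
    then show ?thesis using U
      by (auto intro!: wf_TVar[where U=U] simp: nth_append)
  qed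
next
  case (All S)
  from All.prems have "wf_type ((TVarB Top # G1) @ G2) S" by (auto elim!: wfE_TVar wfE_All)
  from All.IH[OF this] show ?case by (auto intro: wf_All)
qed (auto elim!: wfE_Arrow wfE_Meet intro: wf_type.intros)

lemma wf_lift0: "wf_type G S \<Longrightarrow> wf_type (D @ G) (lift (length D) 0 S)"
  using wf_weaken[of "[]" G S D] by simp

lemma wf_msubst:
  "wf_type (D @ TVarB Top # \<Theta>) T \<Longrightarrow> wf_type (\<Delta> @ \<Theta>) Sm \<Longrightarrow> wf_type (\<Delta> @ \<Theta>) Sp \<Longrightarrow>
   wf_type (D @ \<Delta> @ \<Theta>) (msubst (length D) (length \<Delta>) Sm Sp T)"
proof (induction T arbitrary: D Sm Sp)
  case (TVar i)
  then obtain U where U: "i < length (D @ TVarB Top # \<Theta>)" "(D @ TVarB Top # \<Theta>) ! i = TVarB U"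
    by (auto elim!: wfE_TVar wfE_All)
  consider "i < length D" | "i = length D" | "i > length D" by linarith
  then show ?case
  proof cases
    case 1
    then show ?thesis using U by (auto intro!: wf_TVar simp: nth_append)
  next
    case 2
    then show ?thesis using TVar.prems wf_lift0 by auto
  next
    case 3
    then show ?thesis using U
      by (auto intro!: wf_TVar[where U=U] simp: nth_append nth_Cons' split: if_splits)
  qed
next
  case (All T)
  from All.prems have "wf_type ((TVarB Top # D) @ TVarB Top # \<Theta>) T" by (auto elim!: wfE_TVar wfE_All)
  from All.IH[OF this All.prems(2,3)] show ?case by (auto intro: wf_All)
qed (auto elim!: wfE_Arrow wfE_Meet intro: wf_type.intros)

lemma msubst_lift:
  "k \<le> d \<Longrightarrow> d < k + amt \<Longrightarrow> msubst d n a b (lift amt k U) = lift (amt - 1 + n) k U"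
  by (induction U arbitrary: d k a b) auto

lemma wf_env_rep: "wf_env G \<Longrightarrow> wf_env (replicate d (TVarB Top) @ G)"
  by (induction d) (auto intro: wf_env.intros wf_type.intros)

lemma main:
  "sub G T T' \<Longrightarrow> G = replicate d (TVarB Top) @ TVarB Top # \<Theta> \<Longrightarrow> wf_env (\<Delta> @ \<Theta>) \<Longrightarrow>
   wf_type (\<Delta> @ \<Theta>) Sm \<Longrightarrow> wf_type (\<Delta> @ \<Theta>) Sp \<Longrightarrow>
   sub (replicate d (TVarB Top) @ \<Delta> @ \<Theta>) (msubst d (length \<Delta>) Sm Sp T) (msubst d (length \<Delta>) Sm Sp T')"
proof (induction arbitrary: d Sm Sp rule: sub.induct)
  case (SA_Var \<Gamma> i U)
  have we: "wf_env (replicate d (TVarB Top) @ \<Delta> @ \<Theta>)" using wf_env_rep SA_Var by blast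
  consider "i < d" | "i = d" | "i > d" by linarith
  then show ?case
  proof cases
    case 1
    then have "U = Top" using SA_Var by (auto simp: nth_append)
    then show ?thesis using 1 we
      by (auto intro!: SA_Top wf_TVar[where U=Top] simp: nth_append)
  next
    case 2
    then have "U = Top" using SA_Var by (auto simp: nth_append)
    moreover have "wf_type (replicate d (TVarB Top) @ \<Delta> @ \<Theta>) (lift d 0 Sp)"
      using wf_lift0[OF SA_Var.prems(4), of "replicate d (TVarB Top)"] by simp
    ultimately show ?thesis using 2 we by (auto intro!: SA_Top)
  next
    case 3
    have th: "\<Theta> ! (i - d - 1) = TVarB U" "i - d - 1 < length \<Theta>"
      using SA_Var 3 by (auto simp: nth_append nth_Cons' split: if_splits)
    have eq: "msubst d (length \<Delta>) Sm Sp (lift (Suc i) 0 U) = lift (Suc (i - 1 + length \<Delta>)) 0 U"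
      using 3 by (subst msubst_lift) auto
    have nn: "(replicate d (TVarB Top) @ \<Delta> @ \<Theta>) ! (i - 1 + length \<Delta>) = TVarB U"
      using th 3 by (auto simp: nth_append)
    have "sub (replicate d (TVarB Top) @ \<Delta> @ \<Theta>) (TVar (i - 1 + length \<Delta>)) (lift (Suc (i - 1 + length \<Delta>)) 0 U)"
      by (rule sub.SA_Var[OF we _ nn]) (use th 3 in auto)
    then show ?thesis using 3 eq by simp
  qed
next
  case (SA_Top \<Gamma> T)
  show ?case using SA_Top wf_env_rep wf_msubst[of "replicate d (TVarB Top)"]
    by (auto intro!: sub.SA_Top)
next
  case (SA_Refl \<Gamma> T)
  show ?case using SA_Refl wf_env_rep wf_msubst[of "replicate d (TVarB Top)"]
    by (auto intro!: sub.SA_Refl)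
next
  case (SA_Trans \<Gamma> S T U)
  show ?case
    by (rule sub.SA_Trans[OF SA_Trans.IH(1)[of d Sm Sp] SA_Trans.IH(2)[of d Sm Sp]])
      (use SA_Trans.prems in auto)
next
  case (SA_Arrow \<Gamma> S' S T T')
  have "sub (replicate d (TVarB Top) @ \<Delta> @ \<Theta>) (msubst d (length \<Delta>) Sp Sm S') (msubst d (length \<Delta>) Sp Sm S)"
    by (rule SA_Arrow.IH(1)) (use SA_Arrow.prems in auto)
  moreover have "sub (replicate d (TVarB Top) @ \<Delta> @ \<Theta>) (msubst d (length \<Delta>) Sm Sp T) (msubst d (length \<Delta>) Sm Sp T')"
    by (rule SA_Arrow.IH(2)) (use SA_Arrow.prems in auto)
  ultimately show ?case by (simp add: sub.SA_Arrow)
next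
  case (SA_All \<Gamma> S T)
  have "sub (replicate (Suc d) (TVarB Top) @ \<Delta> @ \<Theta>) (msubst (Suc d) (length \<Delta>) Sm Sp S) (msubst (Suc d) (length \<Delta>) Sm Sp T)"
    by (rule SA_All.IH[of "Suc d"]) (use SA_All.prems in auto)
  then show ?case by (auto intro: sub.SA_All)
next
  case (SA_MeetL \<Gamma> S S')
  show ?case using SA_MeetL wf_env_rep wf_msubst[of "replicate d (TVarB Top)"]
    by (auto intro!: sub.SA_MeetL)
next
  case (SA_MeetR \<Gamma> S S')
  show ?case using SA_MeetR wf_env_rep wf_msubst[of "replicate d (TVarB Top)"]
    by (auto intro!: sub.SA_MeetR)
next
  case (SA_Meet \<Gamma> T S S')
  show ?case
    by (simp, rule sub.SA_Meet[OF SA_Meet.IH(1)[of d Sm Sp] SA_Meet.IH(2)[of d Sm Sp]])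
      (use SA_Meet.prems in auto)
qed

theorem lemma3p5:
  fixes \<Theta> \<Delta> :: env and T T' Sm Sp :: type
  assumes "wf_env (TVarB Top # \<Theta>)"
    and "wf_type (TVarB Top # \<Theta>) T"
    and "wf_type (TVarB Top # \<Theta>) T'"
    and "sub (TVarB Top # \<Theta>) T T'"
    and "wf_env (\<Delta> @ \<Theta>)"
    and "wf_type (\<Delta> @ \<Theta>) Sm"
    and "wf_type (\<Delta> @ \<Theta>) Sp"
  shows "sub (\<Delta> @ \<Theta>) (msubst 0 (length \<Delta>) Sm Sp T) (msubst 0 (length \<Delta>) Sm Sp T')"
  using main[OF assms(4), of 0] assms(5-7) by simp

end
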